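(* Let $G$ be a nonabelian group and let $\psi_1,\dots,\psi_t\in\operatorname{End}(G)$ satisfy $\psi_i([G,G])\le Z(G)$ for all $i$ and $[\psi_i(G),\psi_j(G)]\subseteq Z(G)$ for all $1\le i,j\le t$. For $1\le i\le t$ and $\alpha\in\mathscr{E}$ define $g\circ_{\psi_i,\alpha}h=g\,\psi_i(\alpha(g))\,h\,\psi_i(\alpha(g))^{-1}$. Then \[\Big(G,\ \bigcup_{i=1}^t\{\circ_{\psi_i,\alpha}:\alpha\in\mathscr{E}\}\Big)\] is a brace block.
   Context: $Z(G)$ is the center and $[G,G]$ the commutator subgroup; $[\psi_i(G),\psi_j(G)]$ is the subgroup generated by commutators of elements of $\psi_i(G)$ and $\psi_j(G)$. $\mathscr{E}$ denotes the set of formal expressions $\alpha=n_1\phi_1+\cdots+n_s\phi_s$ with $n_k\in\mathbb Z$, $\phi_k\in\operatorname{End}(G)$ (the free group on $\operatorname{End}(G)$, written additively), acting on $G$ by $\alpha(g)=\phi_1(g^{n_1})\cdots\phi_s(g^{n_s})$. A skew left brace is a triple $(B,\cdot,\circ)$ where $(B,\cdot),(B,\circ)$ are groups and $a\circ(b\cdot c)=(a\circ b)\cdot a^{-1}\cdot(a\circ c)$ for all $a,b,c$, with $a^{-1}$ the inverse in $(B,\cdot)$. A brace block is a set $B$ with a collection $\mathscr O$ of binary operations on $B$ such that $(B,\circ,\star)$ is a skew left brace for every $\circ,\star\in\mathscr O$. *)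

theory Defs
  imports "HOL-Algebra.Algebra"
begin

definition center :: "('a, 'b) monoid_scheme \<Rightarrow> 'a set" where
  "center G = {z \<in> carrier G. \<forall>g \<in> carrier G. z \<otimes>\<^bsub>G\<^esub> g = g \<otimes>\<^bsub>G\<^esub> z}"

text \<open>[A,B]: subgroup generated by the commutators of elements of A and B
  (same commutator convention as the library's derived subgroup).\<close>
definition commutator_subgroup :: "('a, 'b) monoid_scheme \<Rightarrow> 'a set \<Rightarrow> 'a set \<Rightarrow> 'a set" where
  "commutator_subgroup G A B = generate G
     (\<Union>a \<in> A. \<Union>b \<in> B. {a \<otimes>\<^bsub>G\<^esub> b \<otimes>\<^bsub>G\<^esub> inv\<^bsub>G\<^esub> a \<otimes>\<^bsub>G\<^esub> inv\<^bsub>G\<^esub> b})"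

text \<open>Formal expressions alpha = n_1 phi_1 + ... + n_s phi_s, represented as lists of pairs
  (n_k, phi_k) with phi_k an endomorphism of G.\<close>
definition formal_exprs :: "('a, 'b) monoid_scheme \<Rightarrow> (int \<times> ('a \<Rightarrow> 'a)) list set" where
  "formal_exprs G = {xs. \<forall>(n, \<phi>) \<in> set xs. \<phi> \<in> hom G G}"

fun expr_eval :: "('a, 'b) monoid_scheme \<Rightarrow> (int \<times> ('a \<Rightarrow> 'a)) list \<Rightarrow> 'a \<Rightarrow> 'a" where
  "expr_eval G [] g = \<one>\<^bsub>G\<^esub>"
| "expr_eval G ((n, \<phi>) # xs) g = \<phi> (g [^]\<^bsub>G\<^esub> n) \<otimes>\<^bsub>G\<^esub> expr_eval G xs g"

definition circ_op :: "('a, 'b) monoid_scheme \<Rightarrow> ('a \<Rightarrow> 'a) \<Rightarrow> (int \<times> ('a \<Rightarrow> 'a)) list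
    \<Rightarrow> 'a \<Rightarrow> 'a \<Rightarrow> 'a" where
  "circ_op G \<psi> \<alpha> g h =
     g \<otimes>\<^bsub>G\<^esub> \<psi> (expr_eval G \<alpha> g) \<otimes>\<^bsub>G\<^esub> h \<otimes>\<^bsub>G\<^esub> inv\<^bsub>G\<^esub> (\<psi> (expr_eval G \<alpha> g))"

definition skew_left_brace :: "'a set \<Rightarrow> ('a \<Rightarrow> 'a \<Rightarrow> 'a) \<Rightarrow> ('a \<Rightarrow> 'a \<Rightarrow> 'a) \<Rightarrow> bool" where
  "skew_left_brace B ad mu \<longleftrightarrow>
     (\<exists>e1 e2.
        group \<lparr>carrier = B, monoid.mult = ad, one = e1\<rparr> \<and>
        group \<lparr>carrier = B, monoid.mult = mu, one = e2\<rparr> \<and>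
        (\<forall>a \<in> B. \<forall>b \<in> B. \<forall>c \<in> B.
           mu a (ad b c) =
             ad (ad (mu a b) (inv\<^bsub>\<lparr>carrier = B, monoid.mult = ad, one = e1\<rparr>\<^esub> a)) (mu a c)))"

definition brace_block :: "'a set \<Rightarrow> ('a \<Rightarrow> 'a \<Rightarrow> 'a) set \<Rightarrow> bool" where
  "brace_block B Ops \<longleftrightarrow> (\<forall>op1 \<in> Ops. \<forall>op2 \<in> Ops. skew_left_brace B op1 op2)"

end

theory Submission
  imports Defs
begin


definition zeq :: "('a, 'b) monoid_scheme \<Rightarrow> 'a \<Rightarrow> 'a \<Rightarrow> bool" where
  "zeq G u v \<longleftrightarrow> u \<in> carrier G \<and> v \<in> carrier G \<and> inv\<^bsub>G\<^esub> u \<otimes>\<^bsub>G\<^esub> v \<in> center G"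

definition cj :: "('a, 'b) monoid_scheme \<Rightarrow> 'a \<Rightarrow> 'a \<Rightarrow> 'a" where
  "cj G u y = u \<otimes>\<^bsub>G\<^esub> y \<otimes>\<^bsub>G\<^esub> inv\<^bsub>G\<^esub> u"

context group
begin

lemma lcan1[simp]: "u \<in> carrier G \<Longrightarrow> x \<in> carrier G \<Longrightarrow> inv u \<otimes> (u \<otimes> x) = x"
  by (simp add: m_assoc[symmetric])

lemma lcan2[simp]: "u \<in> carrier G \<Longrightarrow> x \<in> carrier G \<Longrightarrow> u \<otimes> (inv u \<otimes> x) = x"
  by (simp add: m_assoc[symmetric])

lemma Z_carr: "z \<in> center G \<Longrightarrow> z \<in> carrier G"
  by (simp add: center_def)

lemma Z_comm: "z \<in> center G \<Longrightarrow> g \<in> carrier G \<Longrightarrow> z \<otimes> g = g \<otimes> z"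
  by (simp add: center_def)

lemma Z_one: "\<one> \<in> center G"
  by (simp add: center_def)

lemma Z_mult: "z \<in> center G \<Longrightarrow> w \<in> center G \<Longrightarrow> z \<otimes> w \<in> center G"
proof -
  assume z: "z \<in> center G" and w: "w \<in> center G"
  have zc: "z \<in> carrier G" "w \<in> carrier G" using z w by (auto simp: center_def)
  { fix g assume g: "g \<in> carrier G"
    have "z \<otimes> w \<otimes> g = z \<otimes> (w \<otimes> g)" using zc g by (simp add: m_assoc)
    also have "\<dots> = z \<otimes> (g \<otimes> w)" using w g by (simp add: center_def)
    also have "\<dots> = (z \<otimes> g) \<otimes> w" using zc g by (simp add: m_assoc)
    also have "\<dots> = (g \<otimes> z) \<otimes> w" using z g by (simp add: center_def)
    also have "\<dots> = g \<otimes> (z \<otimes> w)" using zc g by (simp add: m_assoc)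
    finally have "z \<otimes> w \<otimes> g = g \<otimes> (z \<otimes> w)" . }
  then show ?thesis using zc by (simp add: center_def)
qed

lemma Z_inv: assumes "z \<in> center G" shows "inv z \<in> center G"
proof -
  have zc: "z \<in> carrier G" using assms Z_carr by auto
  { fix g assume g: "g \<in> carrier G"
    have "inv z \<otimes> g = inv z \<otimes> g \<otimes> z \<otimes> inv z" using zc g by (simp add: m_assoc)
    also have "\<dots> = inv z \<otimes> (z \<otimes> g) \<otimes> inv z" using zc g Z_comm[OF assms g] by (simp add: m_assoc)
    also have "\<dots> = g \<otimes> inv z" using zc g by (simp add: m_assoc[symmetric])
    finally have "inv z \<otimes> g = g \<otimes> inv z" . }
  then show ?thesis using zc by (simp add: center_def)
qed

lemma zeq_carr: "zeq G u v \<Longrightarrow> u \<in> carrier G \<and> v \<in> carrier G"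
  by (simp add: zeq_def)

lemma zeq_refl: "u \<in> carrier G \<Longrightarrow> zeq G u u"
  by (simp add: zeq_def Z_one)

lemma zeq_sym: assumes "zeq G u v" shows "zeq G v u"
proof -
  have u: "u \<in> carrier G" and v: "v \<in> carrier G" and z: "inv u \<otimes> v \<in> center G"
    using assms by (auto simp: zeq_def)
  have "inv (inv u \<otimes> v) = inv v \<otimes> u" using u v by (simp add: inv_mult_group)
  then show ?thesis using Z_inv[OF z] u v by (simp add: zeq_def)
qed

lemma zeq_trans: assumes "zeq G u v" "zeq G v w" shows "zeq G u w"
proof -
  have u: "u \<in> carrier G" and v: "v \<in> carrier G" and w: "w \<in> carrier G"
    and z1: "inv u \<otimes> v \<in> center G" and z2: "inv v \<otimes> w \<in> center G"
    using assms by (auto simp: zeq_def)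
  have "(inv u \<otimes> v) \<otimes> (inv v \<otimes> w) = inv u \<otimes> w" using u v w
    by (simp add: m_assoc[symmetric]) (simp add: m_assoc)
  then show ?thesis using Z_mult[OF z1 z2] u w by (simp add: zeq_def)
qed

lemma zeq_ex: "zeq G u v \<Longrightarrow> \<exists>z\<in>center G. v = u \<otimes> z"
  unfolding zeq_def
  by (rule bexI[of _ "inv u \<otimes> v"]) (auto simp: m_assoc[symmetric])

lemma zeq_intro: "u \<in> carrier G \<Longrightarrow> z \<in> center G \<Longrightarrow> zeq G u (u \<otimes> z)"
  unfolding zeq_def using Z_carr by (simp add: m_assoc[symmetric])

lemma zeq_mult: assumes "zeq G u u'" "zeq G v v'" shows "zeq G (u \<otimes> v) (u' \<otimes> v')"
proof -
  obtain z where z: "z \<in> center G" "u' = u \<otimes> z" using zeq_ex[OF assms(1)] by auto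
  obtain w where w: "w \<in> center G" "v' = v \<otimes> w" using zeq_ex[OF assms(2)] by auto
  have u: "u \<in> carrier G" and v: "v \<in> carrier G" using assms zeq_carr by auto
  have zc: "z \<in> carrier G" "w \<in> carrier G" using z w Z_carr by auto
  have "u' \<otimes> v' = u \<otimes> v \<otimes> (z \<otimes> w)"
    using z w u v zc Z_comm[OF z(1), of v] by (simp add: m_assoc) (simp add: m_assoc[symmetric])
  then show ?thesis using zeq_intro[of "u \<otimes> v" "z \<otimes> w"] u v Z_mult[OF z(1) w(1)] by simp
qed

lemma zeq_inv: assumes "zeq G u u'" shows "zeq G (inv u) (inv u')"
proof -
  obtain z where z: "z \<in> center G" "u' = u \<otimes> z" using zeq_ex[OF assms(1)] by auto
  have u: "u \<in> carrier G" using assms zeq_carr by auto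
  have zc: "z \<in> carrier G" using z Z_carr by auto
  have "inv u' = inv u \<otimes> inv z" using z u zc Z_comm[OF Z_inv[OF z(1)], of "inv u"]
    by (simp add: inv_mult_group)
  then show ?thesis using zeq_intro[of "inv u" "inv z"] u Z_inv[OF z(1)] by simp
qed

lemma cj_carr[simp]: "u \<in> carrier G \<Longrightarrow> y \<in> carrier G \<Longrightarrow> cj G u y \<in> carrier G"
  by (simp add: cj_def)

lemma cj_zeq: assumes "zeq G u v" "y \<in> carrier G" shows "cj G v y = cj G u y"
proof -
  obtain z where z: "z \<in> center G" "v = u \<otimes> z" using zeq_ex[OF assms(1)] by auto
  have u: "u \<in> carrier G" using assms zeq_carr by auto
  have zc: "z \<in> carrier G" using z Z_carr by auto
  have "u \<otimes> z \<otimes> y \<otimes> inv (u \<otimes> z) = u \<otimes> (z \<otimes> y) \<otimes> inv z \<otimes> inv u"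
    using u zc assms(2) by (simp add: inv_mult_group m_assoc)
  also have "\<dots> = u \<otimes> y \<otimes> inv u"
    using u zc assms(2) Z_comm[OF z(1) assms(2)] by (simp add: m_assoc)
  finally show ?thesis using z by (simp add: cj_def)
qed

lemma cj_mult: "u \<in> carrier G \<Longrightarrow> a \<in> carrier G \<Longrightarrow> b \<in> carrier G \<Longrightarrow>
  cj G u (a \<otimes> b) = cj G u a \<otimes> cj G u b"
  by (simp add: cj_def m_assoc)

lemma cj_comp: "u \<in> carrier G \<Longrightarrow> v \<in> carrier G \<Longrightarrow> a \<in> carrier G \<Longrightarrow>
  cj G (u \<otimes> v) a = cj G u (cj G v a)"
  by (simp add: cj_def m_assoc inv_mult_group)

lemma cj_one: "u \<in> carrier G \<Longrightarrow> cj G u \<one> = \<one>"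
  by (simp add: cj_def)

lemma cj_inv: "u \<in> carrier G \<Longrightarrow> a \<in> carrier G \<Longrightarrow> cj G u (inv a) = inv (cj G u a)"
  by (simp add: cj_def m_assoc inv_mult_group)

lemma cj_cancel: "u \<in> carrier G \<Longrightarrow> a \<in> carrier G \<Longrightarrow> cj G u (cj G (inv u) a) = a"
  by (simp add: cj_def m_assoc)

definition zcomm where "zcomm u v \<longleftrightarrow> zeq G (u \<otimes> v) (v \<otimes> u)"

lemma zcomm_carr: "zcomm u v \<Longrightarrow> u \<in> carrier G \<Longrightarrow> v \<in> carrier G \<Longrightarrow> True" by simp

lemma zcomm_sym: "zcomm u v \<Longrightarrow> zcomm v u"
  by (simp add: zcomm_def zeq_sym)

lemma zcomm_pow1: assumes "zcomm u v" "u \<in> carrier G" "v \<in> carrier G"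
  shows "zcomm (u [^] (n::nat)) v"
proof (induction n)
  case 0 then show ?case using assms by (simp add: zcomm_def zeq_refl)
next
  case (Suc n)
  have "zeq G (u [^] n \<otimes> (u \<otimes> v)) (u [^] n \<otimes> (v \<otimes> u))"
    using assms zeq_mult zeq_refl by (simp add: zcomm_def)
  moreover have "zeq G ((u [^] n \<otimes> v) \<otimes> u) ((v \<otimes> u [^] n) \<otimes> u)"
    using Suc assms zeq_mult zeq_refl by (simp add: zcomm_def)
  ultimately show ?case using assms zeq_trans
    by (simp add: zcomm_def m_assoc)
qed

lemma zcomm_inv: assumes "zcomm u v" "u \<in> carrier G" "v \<in> carrier G"
  shows "zcomm (inv u) v"
proof -
  have "zeq G (inv u \<otimes> (u \<otimes> v) \<otimes> inv u) (inv u \<otimes> (v \<otimes> u) \<otimes> inv u)"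
    using zeq_mult[OF zeq_mult[OF zeq_refl[of "inv u"] assms(1)[unfolded zcomm_def]] zeq_refl[of "inv u"]] assms
    by simp
  then have "zeq G (v \<otimes> inv u) (inv u \<otimes> v)"
    using assms by (simp add: m_assoc[symmetric]) (simp add: m_assoc)
  then show ?thesis by (simp add: zcomm_def zeq_sym)
qed

lemma ipow_neg: assumes "n < 0" shows "x [^] (n::int) = inv (x [^] nat (- n))"
  unfolding int_pow_def2 using assms by (rule if_P)

lemma ipow_nonneg: assumes "\<not> n < 0" shows "x [^] (n::int) = x [^] nat n"
  unfolding int_pow_def2 using assms by (rule if_not_P)

lemma zcomm_ipow1: assumes "zcomm u v" "u \<in> carrier G" "v \<in> carrier G"
  shows "zcomm (u [^] (n::int)) v"
proof (cases "n < 0")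
  case True
  have "zcomm (inv (u [^] nat (- n))) v" using assms zcomm_pow1 zcomm_inv by simp
  then show ?thesis using True by (simp only: ipow_neg)
next
  case False
  have "zcomm (u [^] nat n) v" using assms zcomm_pow1 by simp
  then show ?thesis using False by (simp only: ipow_nonneg[OF False])
qed

lemma zcomm_ipow: assumes "zcomm u v" "u \<in> carrier G" "v \<in> carrier G"
  shows "zcomm (u [^] (n::int)) (v [^] (m::int))"
  using assms zcomm_ipow1 zcomm_sym by simp

lemma zcomm_pow_distrib: assumes "zcomm u v" "u \<in> carrier G" "v \<in> carrier G"
  shows "zeq G ((u \<otimes> v) [^] (n::nat)) (u [^] n \<otimes> v [^] n)"
proof (induction n)
  case 0 then show ?case by (simp add: zeq_refl)
next
  case (Suc n)
  have c: "zcomm (v [^] n) u" using zcomm_pow1[of v u n] assms zcomm_sym by simp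
  have "zeq G ((u \<otimes> v) [^] n \<otimes> (u \<otimes> v)) ((u [^] n \<otimes> v [^] n) \<otimes> (u \<otimes> v))"
    using Suc assms zeq_mult zeq_refl by simp
  moreover have "zeq G (u [^] n \<otimes> (v [^] n \<otimes> u) \<otimes> v) (u [^] n \<otimes> (u \<otimes> v [^] n) \<otimes> v)"
    using c assms zeq_mult zeq_refl by (simp add: zcomm_def)
  ultimately show ?case using assms zeq_trans
    by (simp add: m_assoc)
qed

lemma zcomm_ipow_distrib: assumes "zcomm u v" "u \<in> carrier G" "v \<in> carrier G"
  shows "zeq G ((u \<otimes> v) [^] (n::int)) (u [^] n \<otimes> v [^] n)"
proof (cases "n < 0")
  case False then show ?thesis using zcomm_pow_distrib[OF assms] by (simp only: ipow_nonneg[OF False])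
next
  case True
  define m where "m = nat (-n)"
  have c: "zcomm (v [^] m) (u [^] m)" using zcomm_ipow[OF zcomm_sym[OF assms(1)] assms(3,2), of "int m" "int m"]
    by (simp add: int_pow_int)
  have "zeq G (inv ((u \<otimes> v) [^] m)) (inv (u [^] m \<otimes> v [^] m))"
    using zeq_inv zcomm_pow_distrib[OF assms] by simp
  moreover have "inv (u [^] m \<otimes> v [^] m) = inv (v [^] m) \<otimes> inv (u [^] m)"
    using assms by (simp add: inv_mult_group)
  moreover have "zcomm (inv (v [^] m)) (inv (u [^] m))"
    using c assms zcomm_inv zcomm_sym by simp
  ultimately have "zeq G (inv ((u \<otimes> v) [^] m)) (inv (u [^] m) \<otimes> inv (v [^] m))"
    using assms zeq_trans by (simp add: zcomm_def)
  then show ?thesis using True by (simp only: ipow_neg m_def)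
qed

end


definition opc :: "('a, 'b) monoid_scheme \<Rightarrow> ('a \<Rightarrow> 'a) \<Rightarrow> 'a \<Rightarrow> 'a \<Rightarrow> 'a" where
  "opc G c x y = x \<otimes>\<^bsub>G\<^esub> c x \<otimes>\<^bsub>G\<^esub> y \<otimes>\<^bsub>G\<^esub> inv\<^bsub>G\<^esub> (c x)"

locale zc = group G for G (structure) +
  fixes S :: "'a set"
  assumes S_sub: "S \<subseteq> carrier G"
    and S_comm: "s \<in> S \<Longrightarrow> t \<in> S \<Longrightarrow> zcomm s t"
begin

definition good :: "('a \<Rightarrow> 'a) \<Rightarrow> bool" where
  "good c \<longleftrightarrow> (\<forall>x\<in>carrier G. c x \<in> S) \<and> c \<one> = \<one> \<and>
     (\<forall>x\<in>carrier G. \<forall>y\<in>carrier G. zeq G (c (x \<otimes> y)) (c x \<otimes> c y))"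

lemma S_carr: "s \<in> S \<Longrightarrow> s \<in> carrier G" using S_sub by auto

lemma S_conj: assumes "s \<in> S" "t \<in> S" shows "zeq G (s \<otimes> t \<otimes> inv s) t"
proof -
  have s: "s \<in> carrier G" and t: "t \<in> carrier G" using assms S_carr by auto
  have "zeq G (s \<otimes> t \<otimes> inv s) (t \<otimes> s \<otimes> inv s)"
    using zeq_mult[OF S_comm[OF assms, unfolded zcomm_def] zeq_refl[of "inv s"]] s by simp
  then show ?thesis using s t by (simp add: m_assoc)
qed

lemma opc_cj: "x \<in> carrier G \<Longrightarrow> c x \<in> carrier G \<Longrightarrow> y \<in> carrier G \<Longrightarrow>
  opc G c x y = x \<otimes> cj G (c x) y"
  by (simp add: opc_def cj_def m_assoc)

context
  fixes c assumes gc: "good c"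
begin

lemma cS: "x \<in> carrier G \<Longrightarrow> c x \<in> S" using gc by (simp add: good_def)
lemma cc[simp]: "x \<in> carrier G \<Longrightarrow> c x \<in> carrier G" using cS S_carr by auto
lemma c1: "c \<one> = \<one>" using gc by (simp add: good_def)
lemma chom: "x \<in> carrier G \<Longrightarrow> y \<in> carrier G \<Longrightarrow> zeq G (c (x \<otimes> y)) (c x \<otimes> c y)"
  using gc by (simp add: good_def)

lemma c_inv: assumes x: "x \<in> carrier G" shows "zeq G (c (inv x)) (inv (c x))"
proof -
  have h: "zeq G \<one> (c x \<otimes> c (inv x))" using chom[of x "inv x"] x c1 by simp
  have "zeq G (inv (c x) \<otimes> \<one>) (inv (c x) \<otimes> (c x \<otimes> c (inv x)))"
    using zeq_mult[OF zeq_refl[of "inv (c x)"] h] x by simp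
  then show ?thesis using x by (simp add: zeq_sym)
qed

lemma c_cj: assumes u: "u \<in> carrier G" and y: "y \<in> carrier G" shows "zeq G (c (cj G u y)) (c y)"
proof -
  have "zeq G (c (u \<otimes> y \<otimes> inv u)) (c (u \<otimes> y) \<otimes> c (inv u))" using chom u y by simp
  moreover have "zeq G (c (u \<otimes> y) \<otimes> c (inv u)) (c u \<otimes> c y \<otimes> inv (c u))"
    using zeq_mult[OF chom[OF u y] c_inv[OF u]] .
  moreover have "zeq G (c u \<otimes> c y \<otimes> inv (c u)) (c y)" using S_conj cS u y by simp
  ultimately show ?thesis unfolding cj_def using zeq_trans by blast
qed

lemma opc_closed: "x \<in> carrier G \<Longrightarrow> y \<in> carrier G \<Longrightarrow> opc G c x y \<in> carrier G"
  by (simp add: opc_def)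

lemma c_opc: assumes x: "x \<in> carrier G" and y: "y \<in> carrier G"
  shows "zeq G (c (opc G c x y)) (c x \<otimes> c y)"
proof -
  have "zeq G (c (x \<otimes> cj G (c x) y)) (c x \<otimes> c (cj G (c x) y))" using chom x y by simp
  moreover have "zeq G (c x \<otimes> c (cj G (c x) y)) (c x \<otimes> c y)"
    using zeq_mult[OF zeq_refl c_cj] x y by simp
  ultimately show ?thesis using zeq_trans x y opc_cj by simp
qed

lemma c_xcj: assumes x: "x \<in> carrier G" and u: "u \<in> carrier G" and y: "y \<in> carrier G"
  shows "zeq G (c (x \<otimes> cj G u y)) (c x \<otimes> c y)"
proof -
  have "zeq G (c (x \<otimes> cj G u y)) (c x \<otimes> c (cj G u y))" using chom x y u by simp
  moreover have "zeq G (c x \<otimes> c (cj G u y)) (c x \<otimes> c y)"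
    using zeq_mult[OF zeq_refl c_cj] x y u by simp
  ultimately show ?thesis using zeq_trans by blast
qed

lemma opc_assoc: assumes x: "x \<in> carrier G" and y: "y \<in> carrier G" and w: "w \<in> carrier G"
  shows "opc G c (opc G c x y) w = opc G c x (opc G c y w)"
proof -
  have "opc G c (opc G c x y) w = (x \<otimes> cj G (c x) y) \<otimes> cj G (c (opc G c x y)) w"
    using x y w opc_closed opc_cj by simp
  also have "cj G (c (opc G c x y)) w = cj G (c x \<otimes> c y) w"
    using cj_zeq[OF c_opc[OF x y] w] by simp
  also have "\<dots> = cj G (c x) (cj G (c y) w)" using cj_comp x y w by simp
  also have "(x \<otimes> cj G (c x) y) \<otimes> cj G (c x) (cj G (c y) w) = x \<otimes> cj G (c x) (y \<otimes> cj G (c y) w)"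
    using x y w by (simp add: cj_mult m_assoc)
  also have "\<dots> = opc G c x (opc G c y w)" using x y w opc_closed opc_cj by simp
  finally show ?thesis .
qed

definition bar where "bar x = cj G (inv (c x)) (inv x)"

lemma bar_closed: "x \<in> carrier G \<Longrightarrow> bar x \<in> carrier G" by (simp add: bar_def)

lemma c_bar: assumes x: "x \<in> carrier G" shows "zeq G (c (bar x)) (inv (c x))"
  using zeq_trans[OF c_cj c_inv] x by (simp add: bar_def)

lemma opc_bar: assumes x: "x \<in> carrier G" and y: "y \<in> carrier G"
  shows "opc G c (bar x) y = cj G (inv (c x)) (inv x \<otimes> y)"
proof -
  have "opc G c (bar x) y = bar x \<otimes> cj G (c (bar x)) y" using opc_cj x y bar_closed by simp
  also have "\<dots> = bar x \<otimes> cj G (inv (c x)) y" using cj_zeq[OF zeq_sym[OF c_bar[OF x]] y] by simp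
  finally show ?thesis using x y by (simp add: bar_def cj_mult)
qed

lemma opc_bar_l: "x \<in> carrier G \<Longrightarrow> opc G c (bar x) x = \<one>"
  using opc_bar by (simp add: cj_one)

lemma opc_one: "x \<in> carrier G \<Longrightarrow> opc G c \<one> x = x"
  by (simp add: opc_def c1)

lemma opc_group: "group \<lparr>carrier = carrier G, monoid.mult = opc G c, one = \<one>\<rparr>"
  by (rule groupI) (auto simp: opc_closed opc_assoc opc_one intro!: bexI[of _ "bar _"] opc_bar_l bar_closed)

lemma opc_inv: assumes x: "x \<in> carrier G"
  shows "inv\<^bsub>\<lparr>carrier = carrier G, monoid.mult = opc G c, one = \<one>\<rparr>\<^esub> x = bar x"
  using group.inv_equality[OF opc_group] x opc_bar_l bar_closed by simp

end

lemma brace: assumes g1: "good c1" and g2: "good c2"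
  shows "skew_left_brace (carrier G) (opc G c1) (opc G c2)"
  unfolding skew_left_brace_def
proof (intro exI conjI ballI)
  show "group \<lparr>carrier = carrier G, monoid.mult = opc G c1, one = \<one>\<rparr>" using opc_group[OF g1] .
  show "group \<lparr>carrier = carrier G, monoid.mult = opc G c2, one = \<one>\<rparr>" using opc_group[OF g2] .
  fix a b d assume a: "a \<in> carrier G" and b: "b \<in> carrier G" and d: "d \<in> carrier G"
  have A: "c2 a \<in> carrier G" "c2 a \<in> S" using a cc[OF g2] cS[OF g2] by auto
  have B: "c1 b \<in> carrier G" "c1 b \<in> S" using b cc[OF g1] cS[OF g1] by auto
  have Ca: "c1 a \<in> carrier G" "c1 a \<in> S" using a cc[OF g1] cS[OF g1] by auto
  define P where "P = opc G c2 a b"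
  define Q where "Q = opc G c2 a d"
  have P: "P = a \<otimes> cj G (c2 a) b" "P \<in> carrier G"
    using opc_cj[of a c2 b] A a b by (auto simp: P_def)
  have Q: "Q = a \<otimes> cj G (c2 a) d" "Q \<in> carrier G"
    using opc_cj[of a c2 d] A a d by (auto simp: Q_def)
  have LHS: "opc G c2 a (opc G c1 b d) = P \<otimes> cj G (c2 a \<otimes> c1 b) d"
  proof -
    have "opc G c2 a (opc G c1 b d) = a \<otimes> cj G (c2 a) (b \<otimes> cj G (c1 b) d)"
      using opc_cj[of a c2] opc_cj[of b c1 d] A B a b d opc_closed[OF g1] by simp
    also have "\<dots> = P \<otimes> cj G (c2 a \<otimes> c1 b) d"
      using P A B a b d by (simp add: cj_mult cj_comp m_assoc)
    finally show ?thesis .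
  qed
  have bQ: "opc G c1 (bar c1 a) Q = cj G (inv (c1 a)) (cj G (c2 a) d)"
    using opc_bar[OF g1 a Q(2)] Q a A d by simp
  have cP: "zeq G (c1 P) (c1 a \<otimes> c1 b)" using c_xcj[OF g1 a A(1) b] P(1) by simp
  have z1: "zeq G (c1 a \<otimes> c1 b \<otimes> inv (c1 a) \<otimes> c2 a) (c2 a \<otimes> c1 b)"
    using zeq_trans[OF zeq_mult[OF S_conj[OF Ca(2) B(2)] zeq_refl[OF A(1)]] S_comm[OF B(2) A(2), unfolded zcomm_def]] .
  have "opc G c1 (opc G c1 P (bar c1 a)) Q = opc G c1 P (opc G c1 (bar c1 a) Q)"
    using opc_assoc[OF g1] P Q a bar_closed[OF g1] by simp
  also have "\<dots> = P \<otimes> cj G (c1 P) (cj G (inv (c1 a)) (cj G (c2 a) d))"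
    using bQ opc_cj[of P c1] P cc[OF g1] Ca A d by simp
  also have "\<dots> = P \<otimes> cj G (c1 a \<otimes> c1 b) (cj G (inv (c1 a)) (cj G (c2 a) d))"
    using cj_zeq[OF cP] Ca A d by simp
  also have "cj G (c1 a \<otimes> c1 b) (cj G (inv (c1 a)) (cj G (c2 a) d)) = cj G (c1 a \<otimes> c1 b \<otimes> inv (c1 a) \<otimes> c2 a) d"
    using Ca A B d by (simp add: cj_comp)
  also have "\<dots> = cj G (c2 a \<otimes> c1 b) d" using cj_zeq[OF z1 d] by simp
  finally show "opc G c2 a (opc G c1 b d) =
      opc G c1 (opc G c1 (opc G c2 a b) (inv\<^bsub>\<lparr>carrier = carrier G, monoid.mult = opc G c1, one = \<one>\<rparr>\<^esub> a))
        (opc G c2 a d)"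
    using LHS opc_inv[OF g1 a] by (simp add: P_def Q_def)
qed

end


lemma hom_closed': "h \<in> hom G G \<Longrightarrow> x \<in> carrier G \<Longrightarrow> h x \<in> carrier G"
  by (auto simp: hom_def)

context group
begin

lemma ghom: "h \<in> hom G G \<Longrightarrow> group_hom G G h"
  by (simp add: group_hom_def group_hom_axioms_def is_group)

lemma ee_closed: "\<alpha> \<in> formal_exprs G \<Longrightarrow> x \<in> carrier G \<Longrightarrow> expr_eval G \<alpha> x \<in> carrier G"
proof (induction \<alpha>)
  case Nil then show ?case by simp
next
  case (Cons p xs)
  obtain n \<phi> where p: "p = (n, \<phi>)" by (cases p)
  have ph: "\<phi> \<in> hom G G" and "xs \<in> formal_exprs G" using Cons.prems p by (auto simp: formal_exprs_def)
  then show ?case using Cons p hom_closed'[OF ph, of "x [^] n"] by simp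
qed

lemma ee_one: "\<alpha> \<in> formal_exprs G \<Longrightarrow> expr_eval G \<alpha> \<one> = \<one>"
proof (induction \<alpha>)
  case Nil then show ?case by simp
next
  case (Cons p xs)
  obtain n \<phi> where p: "p = (n, \<phi>)" by (cases p)
  have ph: "\<phi> \<in> hom G G" and "xs \<in> formal_exprs G" using Cons.prems p by (auto simp: formal_exprs_def)
  then show ?case using Cons p group_hom.hom_one[OF ghom[OF ph]] by simp
qed

end

context zc
begin

lemma good_psi:
  assumes psi: "\<psi> \<in> hom G G" and psiS: "\<psi> ` carrier G \<subseteq> S" and al: "\<alpha> \<in> formal_exprs G"
  shows "good (\<lambda>x. \<psi> (expr_eval G \<alpha> x))"
  unfolding good_def
proof (intro conjI ballI)
  fix x assume "x \<in> carrier G"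
  then show "\<psi> (expr_eval G \<alpha> x) \<in> S" using psiS ee_closed[OF al] by auto
next
  show "\<psi> (expr_eval G \<alpha> \<one>) = \<one>" using ee_one[OF al] group_hom.hom_one[OF ghom[OF psi]] by simp
next
  fix x y assume x: "x \<in> carrier G" and y: "y \<in> carrier G"
  have pS: "\<And>g. g \<in> carrier G \<Longrightarrow> \<psi> g \<in> S" using psiS by auto
  have pc: "\<And>g. g \<in> carrier G \<Longrightarrow> \<psi> g \<in> carrier G" using hom_closed'[OF psi] by auto
  show "zeq G (\<psi> (expr_eval G \<alpha> (x \<otimes> y))) (\<psi> (expr_eval G \<alpha> x) \<otimes> \<psi> (expr_eval G \<alpha> y))"
    using al
  proof (induction \<alpha>)
    case Nil then show ?case using group_hom.hom_one[OF ghom[OF psi]] zeq_refl by simp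
  next
    case (Cons p xs)
    obtain n \<phi> where p: "p = (n, \<phi>)" by (cases p)
    have phi: "\<phi> \<in> hom G G" and xs: "xs \<in> formal_exprs G" using Cons.prems p by (auto simp: formal_exprs_def)
    have fh: "(\<lambda>g. \<psi> (\<phi> g)) \<in> hom G G" using psi phi by (auto simp: hom_def)
    define a1 where "a1 = \<psi> (\<phi> (x [^] n))"
    define b1 where "b1 = \<psi> (\<phi> (y [^] n))"
    define a2 where "a2 = \<psi> (expr_eval G xs x)"
    define b2 where "b2 = \<psi> (expr_eval G xs y)"
    have hc: "\<phi> (x [^] n) \<in> carrier G" "\<phi> (y [^] n) \<in> carrier G" "\<phi> x \<in> carrier G" "\<phi> y \<in> carrier G"
      using hom_closed'[OF phi] x y by auto
    have ec: "expr_eval G xs x \<in> carrier G" "expr_eval G xs y \<in> carrier G"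
      using ee_closed[OF xs] x y by auto
    have S4: "a1 \<in> S" "b1 \<in> S" "a2 \<in> S" "b2 \<in> S" using pS hc ec by (auto simp: a1_def b1_def a2_def b2_def)
    have C4: "a1 \<in> carrier G" "b1 \<in> carrier G" "a2 \<in> carrier G" "b2 \<in> carrier G" using S4 S_carr by auto
    have e1: "\<psi> (\<phi> ((x \<otimes> y) [^] n)) = (\<psi> (\<phi> x) \<otimes> \<psi> (\<phi> y)) [^] n"
      using group_hom.hom_int_pow[OF ghom[OF fh], of "x \<otimes> y" n] hom_mult[OF fh] x y by simp
    have e2: "a1 = \<psi> (\<phi> x) [^] n" "b1 = \<psi> (\<phi> y) [^] n"
      using group_hom.hom_int_pow[OF ghom[OF fh]] x y by (auto simp: a1_def b1_def)
    have zc1: "zcomm (\<psi> (\<phi> x)) (\<psi> (\<phi> y))" using S_comm pS hc by simp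
    have z1: "zeq G (\<psi> (\<phi> ((x \<otimes> y) [^] n))) (a1 \<otimes> b1)"
      using zcomm_ipow_distrib[OF zc1] pc hc e1 e2 by simp
    have z2: "zeq G (\<psi> (expr_eval G xs (x \<otimes> y))) (a2 \<otimes> b2)"
      using Cons.IH[OF xs] by (simp add: a2_def b2_def)
    have "\<psi> (expr_eval G (p # xs) (x \<otimes> y)) = \<psi> (\<phi> ((x \<otimes> y) [^] n)) \<otimes> \<psi> (expr_eval G xs (x \<otimes> y))"
      using p hom_mult[OF psi] hom_closed'[OF phi] ee_closed[OF xs] x y by simp
    moreover have "zeq G (\<psi> (\<phi> ((x \<otimes> y) [^] n)) \<otimes> \<psi> (expr_eval G xs (x \<otimes> y))) (a1 \<otimes> b1 \<otimes> (a2 \<otimes> b2))"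
      using zeq_mult[OF z1 z2] .
    moreover have "zeq G (a1 \<otimes> (b1 \<otimes> a2) \<otimes> b2) (a1 \<otimes> (a2 \<otimes> b1) \<otimes> b2)"
      using zeq_mult[OF zeq_mult[OF zeq_refl[OF C4(1)] S_comm[OF S4(2,3), unfolded zcomm_def]] zeq_refl[OF C4(4)]] .
    moreover have "\<psi> (expr_eval G (p # xs) x) \<otimes> \<psi> (expr_eval G (p # xs) y) = a1 \<otimes> a2 \<otimes> (b1 \<otimes> b2)"
      using p hom_mult[OF psi] hc ec by (simp add: a1_def b1_def a2_def b2_def)
    ultimately show ?case using C4 zeq_trans by (simp add: m_assoc)
  qed
qed

end

lemma circ_op_opc: "circ_op G \<psi> \<alpha> = opc G (\<lambda>x. \<psi> (expr_eval G \<alpha> x))"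
  by (intro ext) (simp add: circ_op_def opc_def)



context group
begin

lemma main_block:
  fixes t :: nat and \<psi> :: "nat \<Rightarrow> 'a \<Rightarrow> 'a"
  assumes h3: "\<And>i. i \<in> {1..t} \<Longrightarrow> \<psi> i \<in> hom G G"
    and h5: "\<And>i j. i \<in> {1..t} \<Longrightarrow> j \<in> {1..t} \<Longrightarrow>
           commutator_subgroup G (\<psi> i ` carrier G) (\<psi> j ` carrier G) \<subseteq> center G"
  shows "brace_block (carrier G)
           (\<Union>i \<in> {1..t}. {circ_op G (\<psi> i) \<alpha> | \<alpha>. \<alpha> \<in> formal_exprs G})"
  unfolding brace_block_def
proof (intro ballI)
  fix op1 op2
  assume "op1 \<in> (\<Union>i \<in> {1..t}. {circ_op G (\<psi> i) \<alpha> | \<alpha>. \<alpha> \<in> formal_exprs G})"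
  then obtain i \<alpha> where i: "i \<in> {1..t}" and al: "\<alpha> \<in> formal_exprs G" and o1: "op1 = circ_op G (\<psi> i) \<alpha>"
    by blast
  assume "op2 \<in> (\<Union>i \<in> {1..t}. {circ_op G (\<psi> i) \<alpha> | \<alpha>. \<alpha> \<in> formal_exprs G})"
  then obtain j \<beta> where j: "j \<in> {1..t}" and be: "\<beta> \<in> formal_exprs G" and o2: "op2 = circ_op G (\<psi> j) \<beta>"
    by blast
  define S where "S = \<psi> i ` carrier G \<union> \<psi> j ` carrier G"
  have comm: "zcomm s u" if s: "s \<in> S" and u: "u \<in> S" for s u
  proof -
    obtain k g where k: "k \<in> {1..t}" and g: "g \<in> carrier G" and sg: "s = \<psi> k g"
      using s i j by (auto simp: S_def)
    obtain l h where l: "l \<in> {1..t}" and h: "h \<in> carrier G" and uh: "u = \<psi> l h"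
      using u i j by (auto simp: S_def)
    have hk: "group_hom G G (\<psi> k)" and hl: "group_hom G G (\<psi> l)"
      using h3 k l ghom by auto
    have sc: "s \<in> carrier G" and uc: "u \<in> carrier G"
      using sg uh hk hl g h group_hom.hom_closed by fastforce+
    define a where "a = \<psi> l (inv h)"
    define b where "b = \<psi> k (inv g)"
    have ab: "a = inv u" "b = inv s" using group_hom.hom_inv[OF hl h] group_hom.hom_inv[OF hk g] sg uh
      by (auto simp: a_def b_def)
    have "a \<otimes> b \<otimes> inv a \<otimes> inv b \<in> commutator_subgroup G (\<psi> l ` carrier G) (\<psi> k ` carrier G)"
      unfolding commutator_subgroup_def
      by (rule generate.incl) (use g h in \<open>auto simp: a_def b_def\<close>)
    then have "a \<otimes> b \<otimes> inv a \<otimes> inv b \<in> center G" using h5[OF l k] by blast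
    moreover have "a \<otimes> b \<otimes> inv a \<otimes> inv b = inv (s \<otimes> u) \<otimes> (u \<otimes> s)"
      using ab sc uc by (simp add: inv_mult_group m_assoc)
    ultimately show ?thesis using sc uc by (simp add: zcomm_def zeq_def)
  qed
  have Ssub: "S \<subseteq> carrier G"
    using h3 i j ghom group_hom.hom_closed unfolding S_def by fastforce
  have zcS: "zc G S" unfolding zc_def zc_axioms_def using comm Ssub is_group by blast
  have g1: "zc.good G S (\<lambda>x. \<psi> i (expr_eval G \<alpha> x))"
    using zc.good_psi[OF zcS h3[OF i] _ al] by (auto simp: S_def)
  have g2: "zc.good G S (\<lambda>x. \<psi> j (expr_eval G \<beta> x))"
    using zc.good_psi[OF zcS h3[OF j] _ be] by (auto simp: S_def)
  show "skew_left_brace (carrier G) op1 op2"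
    using zc.brace[OF zcS g1 g2] by (simp add: o1 o2 circ_op_opc)
qed

end

theorem corollary3p4:
  fixes G :: "('a, 'b) monoid_scheme" and t :: nat and \<psi> :: "nat \<Rightarrow> 'a \<Rightarrow> 'a"
  assumes "group G"
    and "\<not> comm_group G"
    and "\<And>i. i \<in> {1..t} \<Longrightarrow> \<psi> i \<in> hom G G"
    and "\<And>i. i \<in> {1..t} \<Longrightarrow> \<psi> i ` derived G (carrier G) \<subseteq> center G"
    and "\<And>i j. i \<in> {1..t} \<Longrightarrow> j \<in> {1..t} \<Longrightarrow>
           commutator_subgroup G (\<psi> i ` carrier G) (\<psi> j ` carrier G) \<subseteq> center G"
  shows "brace_block (carrier G)
           (\<Union>i \<in> {1..t}. {circ_op G (\<psi> i) \<alpha> | \<alpha>. \<alpha> \<in> formal_exprs G})"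
  using group.main_block[OF assms(1), of t \<psi>] assms(3,5) by blast

end
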